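(* For every $n\in\mathbb N$, \[ \mathsf{HLS}_n\bigl(1,(X_C)_C\bigr)=\sum_{\varnothing\neq C_1\subsetneq C_2\subsetneq\dots\subsetneq C_\ell\subseteq[n]}\ \prod_{i=1}^\ell\frac{X_{C_i}}{1-X_{C_i}}, \] the sum including the empty chain ($\ell=0$, contributing $1$). In particular, setting all $X_C=X$, \[ \mathsf{HLS}_n(1,X)=\frac{E_n(X)}{(1-X)^n},\qquad E_n(X)=\sum_{w\in S_n}X^{\#\{i\in[n-1]:\,w(i+1)<w(i)\}}. \]
   Context: Hall–Littlewood–Schubert series: Let $[n]=\{1,\dots,n\}$. $\mathrm{SSYT}_n$ is the set of semistandard Young tableaux with entries in $[n]$ (including the empty one); a tableau is identified with its sequence of columns $(C_1,\dots,C_\ell)$, $C_j\subseteq[n]$ the set of entries of column $j$, and $T_{ij}$ is the entry in row $i$, column $j$. $T$ is reduced if its columns are pairwise distinct; $\mathrm{rSSYT}_n$ is the finite set of reduced tableaux. For cells $(i,j),(i,j+1)$ both in $T$, $\mathrm{Leg}^+_T(i,j)=C_j\cap\{T_{ij},\dots,T_{i,j+1}\}$ if $T_{i,j+1}\notin C_j$, else $\varnothing$ ($\varnothing$ if a cell is missing). $\Phi_T(Y)=\prod_{\mathrm{Leg}^+_T(i,j)\neq\varnothing}(1-Y^{\#\mathrm{Leg}^+_T(i,j)})$. For variables $\mathbf X=(X_C)_{\varnothing\ne C\subseteq[n]}$, $\mathsf{HLS}_n(Y,\mathbf X)=\sum_{T\in\mathrm{rSSYT}_n}\Phi_T(Y)\prod_{C\in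 T}\frac{X_C}{1-X_C}$; $\mathsf{HLS}_n(Y,(f_C)_C)$ denotes the substitution $X_C\mapsto f_C$. $S_n$ is the symmetric group on $[n]$. *)

theory Defs
  imports Main "HOL-Combinatorics.Permutations"
begin

text \<open>A tableau is the list of its columns C_1,...,C_l (each a set of entries).
  Rows are indexed from 0: the entry in row i of column C is the i-th smallest
  element of C.\<close>

definition entry :: "nat set \<Rightarrow> nat \<Rightarrow> nat" where
  "entry C i = sorted_list_of_set C ! i"

definition SSYT :: "nat \<Rightarrow> nat set list \<Rightarrow> bool" where
  "SSYT n T \<longleftrightarrow>
     (\<forall>C\<in>set T. C \<noteq> {} \<and> C \<subseteq> {1..n}) \<and>
     (\<forall>j. Suc j < length T \<longrightarrow>
        card (T ! Suc j) \<le> card (T ! j) \<and>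
        (\<forall>i < card (T ! Suc j). entry (T ! j) i \<le> entry (T ! Suc j) i))"

definition rSSYT :: "nat \<Rightarrow> nat set list set" where
  "rSSYT n = {T. SSYT n T \<and> distinct T}"

text \<open>Leg^+_T(i,j) for the cells (i,j),(i,j+1) (0-indexed); empty if a cell is missing.\<close>
definition LegPlus :: "nat set list \<Rightarrow> nat \<Rightarrow> nat \<Rightarrow> nat set" where
  "LegPlus T i j =
     (if Suc j < length T \<and> i < card (T ! Suc j) \<and> i < card (T ! j)
         \<and> entry (T ! Suc j) i \<notin> T ! j
      then T ! j \<inter> {entry (T ! j) i .. entry (T ! Suc j) i}
      else {})"

definition Phi :: "nat set list \<Rightarrow> 'a::comm_ring_1 \<Rightarrow> 'a" where
  "Phi T Y = (\<Prod>(i, j) \<in> {(i, j). Suc j < length T \<and> i < card (T ! Suc j) \<and> LegPlus T i j \<noteq> {}}.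
                 1 - Y ^ card (LegPlus T i j))"

definition HLS :: "nat \<Rightarrow> 'a::field \<Rightarrow> (nat set \<Rightarrow> 'a) \<Rightarrow> 'a" where
  "HLS n Y X = (\<Sum>T\<in>rSSYT n. Phi T Y * (\<Prod>C\<in>set T. X C / (1 - X C)))"

definition chains :: "nat \<Rightarrow> nat set list set" where
  "chains n = {cs. sorted_wrt (\<subset>) cs \<and> (\<forall>C\<in>set cs. C \<noteq> {} \<and> C \<subseteq> {1..n})}"

definition eulerian :: "nat \<Rightarrow> 'a::comm_ring_1 \<Rightarrow> 'a" where
  "eulerian n x = (\<Sum>w | w permutes {1..n}. x ^ card {i \<in> {1..n-1}. w (Suc i) < w i})"

end

theory Submission
  imports Defs
begin


lemma entry_mono:
  fixes A B :: "nat set"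
  assumes fA: "finite A" and BA: "B \<subseteq> A" and i: "i < card B"
  shows "entry A i \<le> entry B i"
proof (rule ccontr)
  assume "\<not> entry A i \<le> entry B i"
  hence lt: "entry B i < entry A i" by simp
  define a where "a = sorted_list_of_set A"
  define b where "b = sorted_list_of_set B"
  have fB: "finite B" using fA BA finite_subset by blast
  have la: "length a = card A" and lb: "length b = card B" by (simp_all add: a_def b_def)
  have sa: "sorted a" "distinct a" "set a = A" using fA by (simp_all add: a_def)
  have sb: "sorted b" "distinct b" "set b = B" using fB by (simp_all add: b_def)
  have cBA: "card B \<le> card A" using fA BA card_mono by blast
  have "(!) b ` {..i} \<subseteq> {c\<in>A. c \<le> b!i}"
  proof
    fix c assume "c \<in> (!) b ` {..i}"
    then obtain k where k: "k \<le> i" "c = b!k" by auto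
    have "c \<in> B" using k i lb sb(3) nth_mem by fastforce
    moreover have "c \<le> b!i" using k sb(1) i lb by (simp add: sorted_nth_mono)
    ultimately show "c \<in> {c\<in>A. c \<le> b!i}" using BA by auto
  qed
  moreover have "{c\<in>A. c \<le> b!i} \<subseteq> (!) a ` {..<i}"
  proof
    fix c assume c: "c \<in> {c\<in>A. c \<le> b!i}"
    then obtain k where k: "k < length a" "c = a!k" using sa(3) by (auto simp: in_set_conv_nth)
    have "k < i"
    proof (rule ccontr)
      assume "\<not> k < i"
      hence "a!i \<le> a!k" using sa(1) k by (simp add: sorted_nth_mono)
      thus False using lt c k unfolding entry_def a_def[symmetric] b_def[symmetric] by auto
    qed
    thus "c \<in> (!) a ` {..<i}" using k by auto
  qed
  ultimately have "card ((!) b ` {..i}) \<le> card ((!) a ` {..<i})"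
    by (meson card_mono finite_imageI finite_lessThan order_trans)
  moreover have "card ((!) b ` {..i}) = Suc i"
    using i lb sb(2) by (subst card_image) (auto simp: inj_on_def nth_eq_iff_index_eq)
  moreover have "card ((!) a ` {..<i}) \<le> i"
    using card_image_le[of "{..<i}" "(!) a"] by simp
  ultimately show False by simp
qed


lemma entry_in: "finite C \<Longrightarrow> i < card C \<Longrightarrow> entry C i \<in> C"
  unfolding entry_def by (metis length_sorted_list_of_set nth_mem set_sorted_list_of_set)

lemma entry_surj: "finite C \<Longrightarrow> c \<in> C \<Longrightarrow> \<exists>i < card C. entry C i = c"
  unfolding entry_def by (metis in_set_conv_nth length_sorted_list_of_set set_sorted_list_of_set)

definition IPhi :: "nat set list \<Rightarrow> (nat \<times> nat) set" where
  "IPhi T = {(i, j). Suc j < length T \<and> i < card (T ! Suc j) \<and> LegPlus T i j \<noteq> {}}"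

lemma rSSYT_fin_cols: "T \<in> rSSYT n \<Longrightarrow> C \<in> set T \<Longrightarrow> finite C \<and> card C \<le> n"
  unfolding rSSYT_def SSYT_def
  by (metis (no_types, lifting) card_atLeastAtMost card_mono diff_Suc_1 finite_atLeastAtMost finite_subset mem_Collect_eq)

lemma IPhi_finite: assumes "T \<in> rSSYT n" shows "finite (IPhi T)"
proof -
  have "IPhi T \<subseteq> {..<n} \<times> {..<length T}"
  proof
    fix p assume "p \<in> IPhi T"
    then obtain i j where p: "p = (i,j)" "Suc j < length T" "i < card (T ! Suc j)"
      unfolding IPhi_def by auto
    have "card (T ! Suc j) \<le> n" using rSSYT_fin_cols[OF assms, of "T ! Suc j"] p(2) by simp
    thus "p \<in> {..<n} \<times> {..<length T}" using p by auto
  qed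
  thus ?thesis by (rule finite_subset) auto
qed

lemma Phi_one: assumes "T \<in> rSSYT n"
  shows "Phi T (1::'a::comm_ring_1) = (if IPhi T = {} then 1 else 0)"
proof -
  have "Phi T (1::'a) = (\<Prod>p\<in>IPhi T. 0)"
    unfolding Phi_def IPhi_def[symmetric] by (rule prod.cong) auto
  thus ?thesis using IPhi_finite[OF assms] by (simp add: power_0_left card_eq_0_iff)
qed

lemma IPhi_empty_iff: assumes T: "T \<in> rSSYT n"
  shows "IPhi T = {} \<longleftrightarrow> sorted_wrt (\<lambda>A B. B \<subset> A) T"
proof
  assume E: "IPhi T = {}"
  have tr: "transp (\<lambda>A B::nat set. B \<subset> A)" by (auto simp: transp_def)
  show "sorted_wrt (\<lambda>A B. B \<subset> A) T"
    unfolding sorted_wrt_iff_nth_Suc_transp[OF tr]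
  proof (intro allI impI)
    fix j assume j: "Suc j < length T"
    have ss: "SSYT n T" "distinct T" using T by (auto simp: rSSYT_def)
    have fin: "finite (T ! j)" "finite (T ! Suc j)"
      using rSSYT_fin_cols[OF T] j by auto
    have cle: "card (T ! Suc j) \<le> card (T ! j)"
      and ent: "\<forall>i < card (T ! Suc j). entry (T ! j) i \<le> entry (T ! Suc j) i"
      using ss(1) j unfolding SSYT_def by auto
    have sub: "T ! Suc j \<subseteq> T ! j"
    proof
      fix c assume c: "c \<in> T ! Suc j"
      then obtain i where i: "i < card (T ! Suc j)" "entry (T ! Suc j) i = c"
        using entry_surj fin by blast
      show "c \<in> T ! j"
      proof (rule ccontr)
        assume nc: "c \<notin> T ! j"
        have "entry (T ! j) i \<in> LegPlus T i j"
          unfolding LegPlus_def using j i cle nc ent entry_in[OF fin(1), of i] by auto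
        hence "(i, j) \<in> IPhi T" unfolding IPhi_def using j i by auto
        thus False using E by simp
      qed
    qed
    moreover have "T ! Suc j \<noteq> T ! j" using ss(2) j by (simp add: nth_eq_iff_index_eq)
    ultimately show "T ! Suc j \<subset> T ! j" by auto
  qed
next
  assume S: "sorted_wrt (\<lambda>A B. B \<subset> A) T"
  show "IPhi T = {}"
  proof (rule ccontr)
    assume "IPhi T \<noteq> {}"
    then obtain i j where p: "Suc j < length T" "i < card (T ! Suc j)" "LegPlus T i j \<noteq> {}"
      unfolding IPhi_def by auto
    have fin: "finite (T ! Suc j)" using rSSYT_fin_cols[OF T] p(1) by auto
    have "T ! Suc j \<subset> T ! j" using sorted_wrt_nth_less[OF S, of j "Suc j"] p(1) by simp
    hence "entry (T ! Suc j) i \<in> T ! j" using entry_in[OF fin p(2)] by auto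
    thus False using p(3) unfolding LegPlus_def by auto
  qed
qed

lemma sorted_wrt_distinct_irr:
  assumes "sorted_wrt P xs" "\<And>x. \<not> P x x" shows "distinct xs"
  unfolding distinct_conv_nth
proof (intro allI impI)
  fix i j assume ij: "i < length xs" "j < length xs" "i \<noteq> j"
  show "xs ! i \<noteq> xs ! j"
  proof (cases "i < j")
    case True thus ?thesis using sorted_wrt_nth_less[OF assms(1) True ij(2)] assms(2) by metis
  next
    case False hence "j < i" using ij by simp
    thus ?thesis using sorted_wrt_nth_less[OF assms(1) _ ij(1)] assms(2) by metis
  qed
qed

lemma good_rSSYT:
  assumes S: "sorted_wrt (\<lambda>A B. B \<subset> A) T" and C: "\<forall>C\<in>set T. C \<noteq> {} \<and> C \<subseteq> {1..n}"
  shows "T \<in> rSSYT n"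
proof -
  have d: "distinct T" by (rule sorted_wrt_distinct_irr[OF S]) simp
  have "SSYT n T" unfolding SSYT_def
  proof (intro conjI allI impI)
    show "\<forall>C\<in>set T. C \<noteq> {} \<and> C \<subseteq> {1..n}" by fact
  next
    fix j assume j: "Suc j < length T"
    have sub: "T ! Suc j \<subset> T ! j" using sorted_wrt_nth_less[OF S, of j "Suc j"] j by simp
    have fin: "finite (T ! j)" using C j by (meson Suc_lessD finite_atLeastAtMost finite_subset nth_mem)
    show "card (T ! Suc j) \<le> card (T ! j)" using sub fin by (simp add: card_mono)
    fix i assume "i < card (T ! Suc j)"
    thus "entry (T ! j) i \<le> entry (T ! Suc j) i"
      using entry_mono[OF fin] sub by auto
  qed
  thus ?thesis using d by (simp add: rSSYT_def)
qed

lemma finite_rSSYT: "finite (rSSYT n)"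
proof -
  have "rSSYT n \<subseteq> {xs. set xs \<subseteq> Pow {1..n} \<and> length xs \<le> card (Pow {1..n})}"
  proof
    fix T assume T: "T \<in> rSSYT n"
    hence "set T \<subseteq> Pow {1..n}" "distinct T" by (auto simp: rSSYT_def SSYT_def)
    moreover have "card (set T) \<le> card (Pow {1..n})"
      using calculation by (intro card_mono) auto
    ultimately show "T \<in> {xs. set xs \<subseteq> Pow {1..n} \<and> length xs \<le> card (Pow {1..n})}"
      by (simp add: distinct_card)
  qed
  thus ?thesis by (rule finite_subset[OF _ finite_lists_length_le]) simp_all
qed

lemma HLS_one:
  "HLS n (1::'a::field) X = (\<Sum>cs\<in>chains n. \<Prod>C\<in>set cs. X C / (1 - X C))"
proof -
  let ?g = "\<lambda>T. \<Prod>C\<in>set T. X C / (1 - X C)"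
  let ?srt = "sorted_wrt (\<lambda>A B::nat set. B \<subset> A)"
  have "HLS n (1::'a) X = (\<Sum>T\<in>rSSYT n. if ?srt T then ?g T else 0)"
    unfolding HLS_def
    by (rule sum.cong) (auto simp: Phi_one IPhi_empty_iff)
  also have "\<dots> = (\<Sum>T\<in>{T\<in>rSSYT n. ?srt T}. ?g T)"
    by (rule sum.inter_filter[symmetric]) (rule finite_rSSYT)
  also have "{T\<in>rSSYT n. ?srt T} = rev ` chains n"
  proof -
    have "{T\<in>rSSYT n. ?srt T} = {T. rev T \<in> chains n}"
      using good_rSSYT by (auto simp: chains_def sorted_wrt_rev rSSYT_def SSYT_def)
    also have "\<dots> = rev ` chains n"
      by (auto simp: image_iff) (metis rev_rev_ident)
    finally show ?thesis .
  qed
  also have "(\<Sum>T\<in>rev ` chains n. ?g T) = (\<Sum>cs\<in>chains n. ?g (rev cs))"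
    by (subst sum.reindex) (auto simp: inj_on_def)
  finally show ?thesis by simp
qed



definition rk :: "nat set set \<Rightarrow> nat \<Rightarrow> nat" where
  "rk F b = card {C\<in>F. b \<notin> C}"
definition lx :: "nat set set \<Rightarrow> nat \<Rightarrow> nat \<Rightarrow> bool" where
  "lx F b a \<longleftrightarrow> rk F b < rk F a \<or> (rk F b = rk F a \<and> b \<le> a)"
definition pos :: "nat \<Rightarrow> nat set set \<Rightarrow> nat \<Rightarrow> nat" where
  "pos n F a = card {b\<in>{1..n}. lx F b a}"

lemma lx_refl: "lx F a a" by (simp add: lx_def)
lemma lx_total: "lx F a b \<or> lx F b a" by (auto simp: lx_def)
lemma lx_trans: "lx F a b \<Longrightarrow> lx F b c \<Longrightarrow> lx F a c" by (auto simp: lx_def)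
lemma lx_antisym: "lx F a b \<Longrightarrow> lx F b a \<Longrightarrow> a = b" by (auto simp: lx_def)

lemma pos_ge1: "a \<in> {1..n} \<Longrightarrow> 1 \<le> pos n F a"
proof -
  assume a: "a \<in> {1..n}"
  have "a \<in> {b\<in>{1..n}. lx F b a}" using a lx_refl by auto
  moreover have "finite {b\<in>{1..n}. lx F b a}" by simp
  ultimately have "card {b\<in>{1..n}. lx F b a} > 0" using card_gt_0_iff by blast
  thus ?thesis unfolding pos_def by simp
qed

lemma pos_le: "pos n F a \<le> n"
proof -
  have "pos n F a \<le> card {1..n}" unfolding pos_def by (rule card_mono) auto
  thus ?thesis by simp
qed

lemma pos_less:
  assumes "a \<in> {1..n}" "lx F b a" "a \<noteq> b"
  shows "pos n F b < pos n F a"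
  unfolding pos_def
proof (rule psubset_card_mono)
  show "{c \<in> {1..n}. lx F c b} \<subset> {c \<in> {1..n}. lx F c a}"
    using assms lx_trans lx_antisym lx_refl by blast
qed simp

lemma pos_mono:
  assumes "lx F b a"
  shows "pos n F b \<le> pos n F a"
  unfolding pos_def by (rule card_mono) (use assms lx_trans in auto)

lemma pos_inj: "inj_on (pos n F) {1..n}"
proof (rule inj_onI)
  fix a b assume ab: "a \<in> {1..n}" "b \<in> {1..n}" "pos n F a = pos n F b"
  show "a = b"
  proof (rule ccontr)
    assume ne: "a \<noteq> b"
    from lx_total[of F a b] show False
      using pos_less[of a n F b] pos_less[of b n F a] ab ne by auto
  qed
qed

lemma pos_bij: "bij_betw (pos n F) {1..n} {1..n}"
proof -
  have sub: "pos n F ` {1..n} \<subseteq> {1..n}" using pos_ge1 pos_le by fastforce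
  have "card (pos n F ` {1..n}) = card {1..n::nat}" using pos_inj card_image by blast
  hence "pos n F ` {1..n} = {1..n}" using sub by (simp add: card_subset_eq)
  thus ?thesis using pos_inj by (simp add: bij_betw_def)
qed

lemma binom_subsets:
  fixes x :: "'a::comm_ring_1"
  assumes R: "finite R" and D: "D \<subseteq> R"
  shows "(\<Sum>S\<in>{S. D \<subseteq> S \<and> S \<subseteq> R}. x ^ card S * (1 - x) ^ (card R - card S)) = x ^ card D"
proof -
  let ?g = "\<lambda>a. if a \<in> D then 0 else 1 - x"
  have "(\<Prod>a\<in>R. x + ?g a) = (\<Sum>B\<in>Pow R. (\<Prod>a\<in>B. x) * (\<Prod>a\<in>R-B. ?g a))"
    by (rule prod_add[OF R])
  also have "\<dots> = (\<Sum>B\<in>Pow R. if D \<subseteq> B then x ^ card B * (1 - x) ^ (card R - card B) else 0)"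
  proof (rule sum.cong[OF refl])
    fix B assume B: "B \<in> Pow R"
    have fB: "finite B" using B R finite_subset by auto
    show "(\<Prod>a\<in>B. x) * (\<Prod>a\<in>R-B. ?g a) = (if D \<subseteq> B then x ^ card B * (1 - x) ^ (card R - card B) else 0)"
    proof (cases "D \<subseteq> B")
      case True
      hence "(\<Prod>a\<in>R-B. ?g a) = (\<Prod>a\<in>R-B. 1 - x)" by (intro prod.cong) auto
      thus ?thesis using True B R fB by (simp add: card_Diff_subset)
    next
      case False
      then obtain a where "a \<in> D" "a \<notin> B" by auto
      hence "(\<Prod>a\<in>R-B. ?g a) = 0" using D R by (intro prod_zero) auto
      thus ?thesis using False by simp
    qed
  qed
  also have "\<dots> = (\<Sum>B\<in>{B\<in>Pow R. D \<subseteq> B}. x ^ card B * (1 - x) ^ (card R - card B))"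
    by (rule sum.inter_filter[symmetric]) (simp add: R)
  also have "{B\<in>Pow R. D \<subseteq> B} = {S. D \<subseteq> S \<and> S \<subseteq> R}" by auto
  finally have eq: "(\<Prod>a\<in>R. x + ?g a) = (\<Sum>S\<in>{S. D \<subseteq> S \<and> S \<subseteq> R}. x ^ card S * (1 - x) ^ (card R - card S))" .
  have "(\<Prod>a\<in>R. x + ?g a) = (\<Prod>a\<in>R. if a \<in> D then x else 1)" by (intro prod.cong) auto
  also have "\<dots> = (\<Prod>a\<in>R \<inter> {a. a \<in> D}. x) * (\<Prod>a\<in>R \<inter> - {a. a \<in> D}. 1)"
    by (rule prod.If_cases[OF R])
  also have "R \<inter> {a. a \<in> D} = D" using D by auto
  finally have "(\<Prod>a\<in>R. x + ?g a) = x ^ card D" by simp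
  thus ?thesis using eq by simp
qed


definition Des :: "nat \<Rightarrow> (nat \<Rightarrow> nat) \<Rightarrow> nat set" where
  "Des n w = {i\<in>{1..n-1}. w (Suc i) < w i}"
definition chn :: "(nat \<Rightarrow> nat) \<Rightarrow> nat set \<Rightarrow> nat set list" where
  "chn w S = map (\<lambda>s. w ` {1..s}) (sorted_list_of_set S)"
definition PP :: "nat \<Rightarrow> ((nat \<Rightarrow> nat) \<times> nat set) set" where
  "PP n = Sigma {w. w permutes {1..n}} (\<lambda>w. {S. Des n w \<subseteq> S \<and> S \<subseteq> {1..n}})"

lemma card_w_seg: "(w::nat\<Rightarrow>nat) permutes A \<Longrightarrow> card (w ` {1..s}) = s"
  using permutes_inj[of w A] by (simp add: card_image inj_on_subset)

lemma inj_w_seg: assumes w: "(w::nat\<Rightarrow>nat) permutes A" shows "inj (\<lambda>s. w ` {1..s})"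
proof (rule injI)
  fix s t assume eq: "w ` {1..s} = w ` {1..t}"
  have "card (w ` {1..s}) = card (w ` {1..t})" using eq by simp
  thus "s = t" using card_w_seg[OF w] by simp
qed

lemma rk_w:
  assumes w: "(w::nat\<Rightarrow>nat) permutes A" and S: "finite S" and j: "1 \<le> j"
  shows "rk ((\<lambda>s. w ` {1..s}) ` S) (w j) = card {s\<in>S. s < j}"
proof -
  let ?f = "\<lambda>s. w ` {1..s}"
  have inj: "inj w" using permutes_inj[OF w] .
  have "{C\<in>?f ` S. w j \<notin> C} = ?f ` {s\<in>S. w j \<notin> ?f s}" by auto
  also have "{s\<in>S. w j \<notin> ?f s} = {s\<in>S. s < j}"
    using inj j by (auto simp: inj_image_mem_iff)
  finally have "{C\<in>?f ` S. w j \<notin> C} = ?f ` {s\<in>S. s < j}" .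
  thus ?thesis unfolding rk_def
    using inj_w_seg[OF w] by (simp add: card_image inj_on_subset)
qed

lemma lx_w_strict:
  assumes w: "w permutes {1..n}" and D: "Des n w \<subseteq> S" and S: "S \<subseteq> {1..n}"
    and ij: "1 \<le> i" "i < j" "j \<le> n"
  defines "F \<equiv> (\<lambda>s. w ` {1..s}) ` S"
  shows "rk F (w i) < rk F (w j) \<or> (rk F (w i) = rk F (w j) \<and> w i < w j)"
proof -
  have fS: "finite S" using S finite_subset by blast
  have inj: "inj w" using permutes_inj[OF w] .
  have ri: "rk F (w i) = card {s\<in>S. s < i}" unfolding F_def by (rule rk_w[OF w fS]) (use ij in simp)
  have rj: "rk F (w j) = card {s\<in>S. s < j}" unfolding F_def by (rule rk_w[OF w fS]) (use ij in simp)
  have sub: "{s\<in>S. s < i} \<subseteq> {s\<in>S. s < j}" using ij by auto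
  have fin: "finite {s\<in>S. s < j}" using fS by simp
  show ?thesis
  proof (cases "card {s\<in>S. s < i} < card {s\<in>S. s < j}")
    case True thus ?thesis using ri rj by simp
  next
    case False
    hence "card {s\<in>S. s < i} = card {s\<in>S. s < j}" using card_mono[OF fin sub] by simp
    hence eq: "{s\<in>S. s < i} = {s\<in>S. s < j}" using card_subset_eq[OF fin sub] by simp
    have noS: "\<And>k. i \<le> k \<Longrightarrow> k < j \<Longrightarrow> k \<notin> S"
    proof -
      fix k assume "i \<le> k" "k < j"
      thus "k \<notin> S" using eq by (metis (mono_tags, lifting) mem_Collect_eq not_le)
    qed
    have step: "\<And>k. i \<le> k \<Longrightarrow> k < j \<Longrightarrow> w k < w (Suc k)"
    proof -
      fix k assume k: "i \<le> k" "k < j"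
      have "k \<notin> Des n w" using noS[OF k] D by auto
      moreover have "k \<in> {1..n-1}" using k ij by auto
      ultimately have "\<not> w (Suc k) < w k" unfolding Des_def by auto
      moreover have "w (Suc k) \<noteq> w k" using inj by (metis injD n_not_Suc_n)
      ultimately show "w k < w (Suc k)" by simp
    qed
    have "\<forall>k. i < k \<and> k \<le> j \<longrightarrow> w i < w k"
    proof (intro allI)
      fix k show "i < k \<and> k \<le> j \<longrightarrow> w i < w k"
      proof (induction k)
        case 0 thus ?case by simp
      next
        case (Suc m)
        show ?case
        proof
          assume m: "i < Suc m \<and> Suc m \<le> j"
          show "w i < w (Suc m)"
          proof (cases "m = i")
            case True thus ?thesis using step[of i] m by simp
          next
            case False
            hence "w i < w m" using Suc.IH m by simp
            also have "w m < w (Suc m)" using step[of m] m by simp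
            finally show ?thesis .
          qed
        qed
      qed
    qed
    hence "w i < w j" using ij by simp
    thus ?thesis using ri rj eq by simp
  qed
qed

lemma pos_w:
  assumes w: "w permutes {1..n}" and D: "Des n w \<subseteq> S" and S: "S \<subseteq> {1..n}"
    and j: "j \<in> {1..n}"
  shows "pos n ((\<lambda>s. w ` {1..s}) ` S) (w j) = j"
proof -
  define F where "F = (\<lambda>s. w ` {1..s}) ` S"
  have key: "\<And>i. i \<in> {1..n} \<Longrightarrow> lx F (w i) (w j) \<longleftrightarrow> i \<le> j"
  proof -
    fix i assume i: "i \<in> {1..n}"
    show "lx F (w i) (w j) \<longleftrightarrow> i \<le> j"
    proof (cases i j rule: linorder_cases)
      case less thus ?thesis using lx_w_strict[OF w D S, of i j] i j unfolding F_def lx_def by auto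
    next
      case equal thus ?thesis by (simp add: lx_refl)
    next
      case greater thus ?thesis using lx_w_strict[OF w D S, of j i] i j unfolding F_def lx_def by auto
    qed
  qed
  have img: "w ` {1..n} = {1..n}" using permutes_image[OF w] .
  have "{b\<in>{1..n}. lx F b (w j)} = w ` {1..j}"
  proof
    show "{b\<in>{1..n}. lx F b (w j)} \<subseteq> w ` {1..j}"
    proof
      fix b assume b: "b \<in> {b\<in>{1..n}. lx F b (w j)}"
      then obtain i where i: "i \<in> {1..n}" "b = w i" using img by (metis (no_types, lifting) imageE mem_Collect_eq)
      thus "b \<in> w ` {1..j}" using key[OF i(1)] b by auto
    qed
  next
    show "w ` {1..j} \<subseteq> {b\<in>{1..n}. lx F b (w j)}"
    proof
      fix b assume "b \<in> w ` {1..j}"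
      then obtain i where i: "i \<in> {1..j}" "b = w i" by auto
      hence "i \<in> {1..n}" using j by auto
      thus "b \<in> {b\<in>{1..n}. lx F b (w j)}" using key i img by auto
    qed
  qed
  thus ?thesis unfolding pos_def F_def[symmetric] using card_w_seg[OF w] by simp
qed



lemma chains_props:
  assumes "cs \<in> chains n"
  shows "sorted_wrt (\<subset>) cs" "\<And>C. C \<in> set cs \<Longrightarrow> C \<noteq> {} \<and> C \<subseteq> {1..n} \<and> finite C"
  using assms unfolding chains_def by (auto intro: finite_subset)

lemma chain_cmp:
  assumes cs: "cs \<in> chains n" and C: "C \<in> set cs" and D: "D \<in> set cs"
  shows "C \<subseteq> D \<or> D \<subseteq> C"
proof -
  have s: "sorted_wrt (\<subset>) cs" using chains_props[OF cs] by simp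
  obtain i where i: "i < length cs" "C = cs ! i" using C by (auto simp: in_set_conv_nth)
  obtain j where j: "j < length cs" "D = cs ! j" using D by (auto simp: in_set_conv_nth)
  show ?thesis
  proof (cases i j rule: linorder_cases)
    case less thus ?thesis using sorted_wrt_nth_less[OF s less j(1)] i j by auto
  next
    case equal thus ?thesis using i j by simp
  next
    case greater thus ?thesis using sorted_wrt_nth_less[OF s greater i(1)] i j by auto
  qed
qed

lemma down_closed:
  assumes cs: "cs \<in> chains n" and C: "C \<in> set cs" and a: "a \<in> C" and l: "lx (set cs) b a"
  shows "b \<in> C"
proof (rule ccontr)
  assume b: "b \<notin> C"
  have "{D\<in>set cs. a \<notin> D} \<subset> {D\<in>set cs. b \<notin> D}"
  proof
    show "{D\<in>set cs. a \<notin> D} \<subseteq> {D\<in>set cs. b \<notin> D}"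
    proof
      fix D assume D: "D \<in> {D\<in>set cs. a \<notin> D}"
      hence "C \<subseteq> D \<or> D \<subseteq> C" using chain_cmp[OF cs C] by auto
      thus "D \<in> {D\<in>set cs. b \<notin> D}" using D a b by auto
    qed
    show "{D\<in>set cs. a \<notin> D} \<noteq> {D\<in>set cs. b \<notin> D}" using C a b by auto
  qed
  hence "rk (set cs) a < rk (set cs) b" unfolding rk_def by (intro psubset_card_mono) auto
  thus False using l unfolding lx_def by auto
qed

lemma chain_set_pos:
  assumes cs: "cs \<in> chains n" and C: "C \<in> set cs"
  shows "C = {a\<in>{1..n}. pos n (set cs) a \<le> card C}"
proof -
  have Cp: "C \<noteq> {}" "C \<subseteq> {1..n}" "finite C" using chains_props(2)[OF cs C] by auto
  show ?thesis
  proof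
    show "C \<subseteq> {a\<in>{1..n}. pos n (set cs) a \<le> card C}"
    proof
      fix a assume a: "a \<in> C"
      have "{b\<in>{1..n}. lx (set cs) b a} \<subseteq> C" using down_closed[OF cs C a] by auto
      hence "pos n (set cs) a \<le> card C" unfolding pos_def using Cp(3) by (rule card_mono[rotated])
      thus "a \<in> {a\<in>{1..n}. pos n (set cs) a \<le> card C}" using a Cp by auto
    qed
  next
    show "{a\<in>{1..n}. pos n (set cs) a \<le> card C} \<subseteq> C"
    proof
      fix a assume a: "a \<in> {a\<in>{1..n}. pos n (set cs) a \<le> card C}"
      show "a \<in> C"
      proof (rule ccontr)
        assume na: "a \<notin> C"
        have "insert a C \<subseteq> {b\<in>{1..n}. lx (set cs) b a}"
        proof
          fix c assume c: "c \<in> insert a C"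
          show "c \<in> {b\<in>{1..n}. lx (set cs) b a}"
          proof (cases "c = a")
            case True thus ?thesis using a lx_refl by auto
          next
            case False
            hence cC: "c \<in> C" using c by auto
            have "\<not> lx (set cs) a c" using down_closed[OF cs C cC] na by auto
            hence "lx (set cs) c a" using lx_total by blast
            thus ?thesis using cC Cp by auto
          qed
        qed
        hence "card (insert a C) \<le> pos n (set cs) a" unfolding pos_def by (intro card_mono) auto
        thus False using a na Cp(3) by simp
      qed
    qed
  qed
qed

definition wB :: "nat \<Rightarrow> nat set set \<Rightarrow> nat \<Rightarrow> nat" where
  "wB n F j = (if j \<in> {1..n} then inv_into {1..n} (pos n F) j else j)"

lemma wB_permutes: "wB n F permutes {1..n}"
proof (rule bij_imp_permutes)
  have "bij_betw (inv_into {1..n} (pos n F)) {1..n} {1..n}"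
    using bij_betw_inv_into[OF pos_bij] .
  thus "bij_betw (wB n F) {1..n} {1..n}"
    by (rule bij_betw_cong[THEN iffD1, rotated]) (simp add: wB_def)
qed (auto simp: wB_def)

lemma pos_wB: "j \<in> {1..n} \<Longrightarrow> pos n F (wB n F j) = j"
  unfolding wB_def using pos_bij[of n F]
  by (simp add: bij_betw_def f_inv_into_f)

lemma wB_in: "j \<in> {1..n} \<Longrightarrow> wB n F j \<in> {1..n}"
  using permutes_in_image[OF wB_permutes] by blast

lemma wB_img: "wB n F ` {1..k} = {a\<in>{1..n}. pos n F a \<le> k}" if k: "k \<le> n"
proof
  show "wB n F ` {1..k} \<subseteq> {a\<in>{1..n}. pos n F a \<le> k}"
  proof
    fix a assume "a \<in> wB n F ` {1..k}"
    then obtain j where j: "j \<in> {1..k}" "a = wB n F j" by auto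
    have jn: "j \<in> {1..n}" using j k by auto
    show "a \<in> {a\<in>{1..n}. pos n F a \<le> k}" using j wB_in[OF jn] pos_wB[OF jn] by auto
  qed
next
  show "{a\<in>{1..n}. pos n F a \<le> k} \<subseteq> wB n F ` {1..k}"
  proof
    fix a assume a: "a \<in> {a\<in>{1..n}. pos n F a \<le> k}"
    have p: "pos n F a \<in> {1..n}" using a pos_ge1 pos_le by auto
    have "wB n F (pos n F a) = a" unfolding wB_def using p a pos_inj by (simp add: inv_into_f_f)
    moreover have "pos n F a \<in> {1..k}" using a pos_ge1 by auto
    ultimately show "a \<in> wB n F ` {1..k}" by (metis imageI)
  qed
qed

lemma wB_chain:
  assumes cs: "cs \<in> chains n" and C: "C \<in> set cs"
  shows "wB n (set cs) ` {1..card C} = C"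
proof -
  have Cp: "C \<subseteq> {1..n}" using chains_props(2)[OF cs C] by auto
  have "card C \<le> n" using card_mono[OF _ Cp] by simp
  thus ?thesis using wB_img chain_set_pos[OF cs C] by simp
qed

lemma wB_Des:
  assumes cs: "cs \<in> chains n"
  shows "Des n (wB n (set cs)) \<subseteq> card ` set cs"
proof
  fix j assume "j \<in> Des n (wB n (set cs))"
  hence j: "j \<in> {1..n-1}" "wB n (set cs) (Suc j) < wB n (set cs) j" unfolding Des_def by auto
  let ?F = "set cs"
  define a where "a = wB n ?F j"
  define b where "b = wB n ?F (Suc j)"
  have jn: "j \<in> {1..n}" "Suc j \<in> {1..n}" using j by auto
  have pa: "pos n ?F a = j" and pb: "pos n ?F b = Suc j" using pos_wB jn a_def b_def by auto
  have ab: "b < a" using j a_def b_def by simp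
  have abn: "a \<in> {1..n}" "b \<in> {1..n}" using wB_in jn a_def b_def by auto
  have "\<not> lx ?F b a" using pos_mono[of ?F b a n] pa pb by auto
  hence rk: "rk ?F a < rk ?F b" using ab unfolding lx_def by auto
  have "\<exists>C\<in>?F. a \<in> C \<and> b \<notin> C"
  proof (rule ccontr)
    assume "\<not> (\<exists>C\<in>?F. a \<in> C \<and> b \<notin> C)"
    hence "{D\<in>?F. b \<notin> D} \<subseteq> {D\<in>?F. a \<notin> D}" by auto
    hence "rk ?F b \<le> rk ?F a" unfolding rk_def by (intro card_mono) auto
    thus False using rk by simp
  qed
  then obtain C where C: "C \<in> ?F" "a \<in> C" "b \<notin> C" by blast
  have Ceq: "C = {a\<in>{1..n}. pos n ?F a \<le> card C}" by (rule chain_set_pos[OF cs C(1)])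
  have mem: "\<And>x. x \<in> C \<longleftrightarrow> x \<in> {a\<in>{1..n}. pos n ?F a \<le> card C}"
    using Ceq by (rule eqset_imp_iff)
  have "j \<le> card C" using mem[of a] C(2) pa by simp
  moreover have "\<not> Suc j \<le> card C" using mem[of b] C(3) pb abn by simp
  ultimately have "card C = j" by simp
  thus "j \<in> card ` ?F" using C(1) by auto
qed

lemma card_chain_range:
  assumes cs: "cs \<in> chains n" shows "card ` set cs \<subseteq> {1..n}"
proof
  fix k assume "k \<in> card ` set cs"
  then obtain C where C: "C \<in> set cs" "k = card C" by auto
  have Cp: "C \<noteq> {}" "C \<subseteq> {1..n}" "finite C" using chains_props(2)[OF cs C(1)] by auto
  have "card C \<le> n" using card_mono[OF _ Cp(2)] by simp
  moreover have "card C \<ge> 1" using Cp by (simp add: Suc_leI card_gt_0_iff)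
  ultimately show "k \<in> {1..n}" using C by simp
qed

lemma chn_wB:
  assumes cs: "cs \<in> chains n"
  shows "chn (wB n (set cs)) (card ` set cs) = cs"
proof -
  have s: "sorted_wrt (\<subset>) cs" using chains_props(1)[OF cs] .
  have "sorted_wrt (<) (map card cs)"
    unfolding sorted_wrt_map
    by (rule sorted_wrt_mono_rel[OF _ s]) (use chains_props(2)[OF cs] in \<open>auto intro: psubset_card_mono\<close>)
  hence sd: "sorted (map card cs)" "distinct (map card cs)" by (simp_all add: strict_sorted_iff)
  have "sorted_list_of_set (card ` set cs) = map card cs"
    using sd by (simp add: sorted_list_of_set_sort_remdups[of "map card cs", simplified] distinct_remdups_id sorted_sort_id)
  hence "chn (wB n (set cs)) (card ` set cs) = map (\<lambda>C. wB n (set cs) ` {1..card C}) cs"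
    unfolding chn_def by simp
  also have "\<dots> = cs" by (rule map_idI) (rule wB_chain[OF cs])
  finally show ?thesis .
qed



lemma PP_D: assumes "(w, S) \<in> PP n"
  shows "w permutes {1..n}" "Des n w \<subseteq> S" "S \<subseteq> {1..n}" "finite S"
  using assms unfolding PP_def by (auto intro: finite_subset)

lemma set_chn: "finite S \<Longrightarrow> set (chn w S) = (\<lambda>s. w ` {1..s}) ` S"
  unfolding chn_def by simp

lemma card_set_chn: assumes "(w, S) \<in> PP n" shows "card (set (chn w S)) = card S"
  using PP_D[OF assms] set_chn inj_w_seg by (metis card_image inj_on_subset subset_UNIV)

lemma card_img_chn: assumes "(w, S) \<in> PP n" shows "card ` set (chn w S) = S"
proof -
  have "card ` set (chn w S) = (\<lambda>s. card (w ` {1..s})) ` S"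
    using set_chn[OF PP_D(4)[OF assms]] by (simp add: image_image)
  also have "\<dots> = S" using card_w_seg[OF PP_D(1)[OF assms]] by simp
  finally show ?thesis .
qed

lemma chn_in_chains: assumes p: "(w, S) \<in> PP n" shows "chn w S \<in> chains n"
proof -
  note P = PP_D[OF p]
  have inj: "inj w" using permutes_inj[OF P(1)] .
  have "sorted_wrt (\<subset>) (chn w S)"
    unfolding chn_def sorted_wrt_map
  proof (rule sorted_wrt_mono_rel[OF _ strict_sorted_list_of_set])
    fix s t :: nat assume st: "s < t"
    have "w ` {1..s} \<subseteq> w ` {1..t}" using st by auto
    moreover have "w t \<notin> w ` {1..s}" using st inj by (auto simp: inj_image_mem_iff)
    moreover have "w t \<in> w ` {1..t}" using st by auto
    ultimately show "w ` {1..s} \<subset> w ` {1..t}" by blast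
  qed
  moreover have "\<forall>C\<in>set (chn w S). C \<noteq> {} \<and> C \<subseteq> {1..n}"
  proof
    fix C assume "C \<in> set (chn w S)"
    then obtain s where s: "s \<in> S" "C = w ` {1..s}" using set_chn[OF P(4)] by auto
    have "s \<in> {1..n}" using s P(3) by auto
    hence "C \<subseteq> w ` {1..n}" using s by auto
    also have "\<dots> = {1..n}" using permutes_image[OF P(1)] .
    finally show "C \<noteq> {} \<and> C \<subseteq> {1..n}" using s \<open>s \<in> {1..n}\<close> by auto
  qed
  ultimately show ?thesis unfolding chains_def by simp
qed

lemma chn_bij: "bij_betw (\<lambda>p. chn (fst p) (snd p)) (PP n) (chains n)"
  unfolding bij_betw_def
proof
  show "inj_on (\<lambda>p. chn (fst p) (snd p)) (PP n)"
  proof (rule inj_onI)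
    fix p q assume p: "p \<in> PP n" and q: "q \<in> PP n"
      and eq: "chn (fst p) (snd p) = chn (fst q) (snd q)"
    obtain w S where pw: "p = (w, S)" by (cases p)
    obtain w' S' where qw: "q = (w', S')" by (cases q)
    have p': "(w, S) \<in> PP n" and q': "(w', S') \<in> PP n" using p q pw qw by auto
    have eq': "chn w S = chn w' S'" using eq pw qw by simp
    have SS: "S = S'" using card_img_chn[OF p'] card_img_chn[OF q'] eq' by simp
    define F where "F = set (chn w S)"
    have F1: "F = (\<lambda>s. w ` {1..s}) ` S" using set_chn[OF PP_D(4)[OF p']] F_def by simp
    have F2: "F = (\<lambda>s. w' ` {1..s}) ` S'" using set_chn[OF PP_D(4)[OF q']] F_def eq' by simp
    have "w = w'"
    proof
      fix j show "w j = w' j"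
      proof (cases "j \<in> {1..n}")
        case True
        have a1: "pos n F (w j) = j" unfolding F1 using PP_D[OF p'] True by (intro pos_w) auto
        have a2: "pos n F (w' j) = j" unfolding F2 using PP_D[OF q'] True by (intro pos_w) auto
        have m1: "w j \<in> {1..n}" using True permutes_in_image[OF PP_D(1)[OF p']] by simp
        have m2: "w' j \<in> {1..n}" using True permutes_in_image[OF PP_D(1)[OF q']] by simp
        show ?thesis by (rule inj_onD[OF pos_inj[of n F]]) (simp_all only: a1 a2 m1 m2)
      next
        case False thus ?thesis
          using permutes_not_in[OF PP_D(1)[OF p'] False] permutes_not_in[OF PP_D(1)[OF q'] False] by simp
      qed
    qed
    thus "p = q" using pw qw SS by simp
  qed
next
  show "(\<lambda>p. chn (fst p) (snd p)) ` PP n = chains n"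
  proof
    show "(\<lambda>p. chn (fst p) (snd p)) ` PP n \<subseteq> chains n"
      using chn_in_chains by auto
  next
    show "chains n \<subseteq> (\<lambda>p. chn (fst p) (snd p)) ` PP n"
    proof
      fix cs assume cs: "cs \<in> chains n"
      have "(wB n (set cs), card ` set cs) \<in> PP n"
        unfolding PP_def using wB_permutes wB_Des[OF cs] card_chain_range[OF cs] by auto
      moreover have "chn (wB n (set cs)) (card ` set cs) = cs" by (rule chn_wB[OF cs])
      ultimately show "cs \<in> (\<lambda>p. chn (fst p) (snd p)) ` PP n"
        by (intro image_eqI[where x="(wB n (set cs), card ` set cs)"]) simp_all
    qed
  qed
qed

lemma chains_sum:
  fixes x :: "'a::field"
  assumes x: "x \<noteq> 1"
  shows "(\<Sum>cs\<in>chains n. \<Prod>C\<in>set cs. x / (1 - x)) = eulerian n x / (1 - x) ^ n"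
proof -
  have x1: "1 - x \<noteq> 0" using x by simp
  have "(\<Sum>cs\<in>chains n. \<Prod>C\<in>set cs. x / (1 - x)) = (\<Sum>cs\<in>chains n. (x / (1 - x)) ^ card (set cs))"
    by simp
  also have "\<dots> = (\<Sum>p\<in>PP n. (x / (1 - x)) ^ card (set (chn (fst p) (snd p))))"
    by (rule sum.reindex_bij_betw[OF chn_bij, symmetric])
  also have "\<dots> = (\<Sum>p\<in>PP n. x ^ card (snd p) * (1 - x) ^ (n - card (snd p)) / (1 - x) ^ n)"
  proof (rule sum.cong[OF refl])
    fix p assume p: "p \<in> PP n"
    obtain w S where pw: "p = (w, S)" by (cases p)
    have p': "(w, S) \<in> PP n" using p pw by simp
    have k: "card S \<le> n" using PP_D[OF p'] card_mono[of "{1..n}" S] by simp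
    have pe: "(1 - x) ^ n = (1 - x) ^ card S * (1 - x) ^ (n - card S)"
      using k by (simp add: power_add[symmetric])
    show "(x / (1 - x)) ^ card (set (chn (fst p) (snd p))) = x ^ card (snd p) * (1 - x) ^ (n - card (snd p)) / (1 - x) ^ n"
      using card_set_chn[OF p'] pw pe x1 by (simp add: power_divide)
  qed
  also have "\<dots> = (\<Sum>p\<in>PP n. x ^ card (snd p) * (1 - x) ^ (n - card (snd p))) / (1 - x) ^ n"
    by (simp add: sum_divide_distrib)
  also have "(\<Sum>p\<in>PP n. x ^ card (snd p) * (1 - x) ^ (n - card (snd p)))
      = (\<Sum>w\<in>{w. w permutes {1..n}}. \<Sum>S\<in>{S. Des n w \<subseteq> S \<and> S \<subseteq> {1..n}}. x ^ card S * (1 - x) ^ (n - card S))"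
    unfolding PP_def
    by (subst sum.Sigma) (auto simp: finite_permutations split_def)
  also have "\<dots> = (\<Sum>w\<in>{w. w permutes {1..n}}. x ^ card (Des n w))"
  proof (rule sum.cong[OF refl])
    fix w
    have "Des n w \<subseteq> {1..n}" unfolding Des_def by auto
    from binom_subsets[OF _ this, of x]
    show "(\<Sum>S\<in>{S. Des n w \<subseteq> S \<and> S \<subseteq> {1..n}}. x ^ card S * (1 - x) ^ (n - card S)) = x ^ card (Des n w)"
      by simp
  qed
  also have "\<dots> = eulerian n x" unfolding eulerian_def Des_def by simp
  finally show ?thesis .
qed

theorem mainTheorem17:
  fixes n :: nat and X :: "nat set \<Rightarrow> 'a::field" and x :: 'a
  shows "((\<forall>C. C \<noteq> {} \<and> C \<subseteq> {1..n} \<longrightarrow> X C \<noteq> 1) \<longrightarrow>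
            HLS n 1 X = (\<Sum>cs\<in>chains n. \<Prod>C\<in>set cs. X C / (1 - X C)))
       \<and> (x \<noteq> 1 \<longrightarrow> HLS n 1 (\<lambda>_. x) = eulerian n x / (1 - x) ^ n)"
proof (intro conjI impI)
  show "HLS n 1 X = (\<Sum>cs\<in>chains n. \<Prod>C\<in>set cs. X C / (1 - X C))" by (rule HLS_one)
next
  assume x: "x \<noteq> 1"
  show "HLS n 1 (\<lambda>_. x) = eulerian n x / (1 - x) ^ n"
    by (subst HLS_one) (rule chains_sum[OF x])
qed


end
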